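(* Let $f:[0,1]\times\mathbb{R}\rightarrow\mathbb{R}$ be continuous and consider the boundary value problem \[ x'''(t)+f(t,x(t))=0,\ t\in(0,1),\qquad x(0)=x(1)=x''(0)=0. \] Assume there exist $\xi:\mathbb{R}^{2}\rightarrow\mathbb{R}$ and $\varphi\in\Phi$ such that: (J1) there exists $N\in\mathbb{N}\setminus\{0\}$ such that for all $a_{0},\dots,a_{N+1}\in\mathbb{R}$ with $\xi(a_{i},a_{i+1})\geq0$ for all $i\in\{0,\ldots,N\}$ one has $\xi(a_{0},a_{N+1})\geq0$; (J2) for all $a,b\in\mathbb{R}$, $\xi(a,b)\geq0$ implies $|f(t,a)-f(t,b)|\leq9\sqrt{3}\,\varphi(|a-b|)$ for all $t\in[0,1]$; (J3) for all $x,y\in C([0,1])$, if $\xi(x(t),y(t))\geq0$ for all $t\in[0,1]$ then $\xi\big((Tx)(t),(Ty)(t)\big)\geq0$ for all $t\in[0,1]$; (J4) there exists $x_{0}\in C([0,1])$ with $\xi\big(x_{0}(t),(Tx_{0})(t)\big)\geq0$ for all $t\in[0,1]$. Then the boundary value problem has a solution. If in addition (J5) for every $x,y\in C([0,1])$ there exist $z_{0},\ldots,z_{n}\in C([0,1])$ with $z_{0}=x$, $z_{n}=y$ and, for each $i\in\{1,\ldots,n\}$, either $\xi(z_{i-1}(t),z_{i}(t))\geq0$ for all $t\in[0,1]$ or $\xi(z_{i}(t),z_{i-1}(t))\geq0$ for all $t\in[0,1]$, then the solution is unique.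
   Context: $C([0,1])$ denotes real continuous functions on $[0,1]$. $G(t,s)=\frac12(1-t)(t-s^2)$ for $0\leq s\leq t\leq1$ and $G(t,s)=\frac12 t(1-s)^2$ for $0\leq t\leq s\leq1$; for $x\in C([0,1])$, $(Tx)(t)=\int_0^1G(t,s)f(s,x(s))\,\mathrm{d}s$. (The boundary value problem is equivalent to the integral equation $x=Tx$ in $C([0,1])$.) $\Phi$ is the set of all nondecreasing functions $\varphi:[0,+\infty)\rightarrow[0,+\infty)$ such that for every $\varepsilon>0$ there exists $\delta(\varepsilon)>0$ with $\varepsilon\leq t<\varepsilon+\delta(\varepsilon)\Rightarrow\varphi(t)<\varepsilon$. *)

theory Defs
  imports "HOL-Analysis.Analysis"
begin

definition G :: "real \<Rightarrow> real \<Rightarrow> real" where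
  "G t s = (if s \<le> t then (1/2) * (1 - t) * (t - s^2) else (1/2) * t * (1 - s)^2)"

text \<open>The integral operator T; elements of C([0,1]) are functions continuous on [0,1].\<close>
definition Top :: "(real \<Rightarrow> real \<Rightarrow> real) \<Rightarrow> (real \<Rightarrow> real) \<Rightarrow> real \<Rightarrow> real" where
  "Top f x t = integral {0..1} (\<lambda>s. G t s * f s (x s))"

definition PhiClass :: "(real \<Rightarrow> real) set" where
  "PhiClass = {\<phi>. (\<forall>t\<ge>0. \<phi> t \<ge> 0) \<and> mono_on {0..} \<phi> \<and>
      (\<forall>\<epsilon>>0. \<exists>\<delta>>0. \<forall>t. \<epsilon> \<le> t \<and> t < \<epsilon> + \<delta> \<longrightarrow> \<phi> t < \<epsilon>)}"

text \<open>Classical solution of x''' + f(t,x) = 0 on (0,1), x(0)=x(1)=x''(0)=0: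
  x \<in> C^2[0,1] (one-sided derivatives at the endpoints), x'' differentiable on (0,1).\<close>
definition bvp_solution :: "(real \<Rightarrow> real \<Rightarrow> real) \<Rightarrow> (real \<Rightarrow> real) \<Rightarrow> bool" where
  "bvp_solution f x \<longleftrightarrow> (\<exists>x1 x2 x3.
      (\<forall>t\<in>{0..1}. (x has_real_derivative x1 t) (at t within {0..1})) \<and>
      (\<forall>t\<in>{0..1}. (x1 has_real_derivative x2 t) (at t within {0..1})) \<and>
      continuous_on {0..1} x2 \<and>
      (\<forall>t\<in>{0<..<1}. (x2 has_real_derivative x3 t) (at t)) \<and>
      (\<forall>t\<in>{0<..<1}. x3 t + f t (x t) = 0) \<and>
      x 0 = 0 \<and> x 1 = 0 \<and> x2 0 = 0)"

end

theory Submission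
  imports Defs
begin



definition TG :: "(real \<Rightarrow> real) \<Rightarrow> real \<Rightarrow> real" where
  "TG g t = integral {0..1} (\<lambda>s. G t s * g s)"

lemma G_alt: "G t s = t*(1-s)^2/2 - (max (t-s) 0)^2/2"
proof (cases "s \<le> t")
  case True thus ?thesis unfolding G_def max_def by (simp add: power2_eq_square field_simps)
next
  case False thus ?thesis unfolding G_def max_def by (simp add: power2_eq_square field_simps)
qed

lemma TG_closed:
  assumes g: "continuous_on {0..1} g" and t: "t \<in> {0..1}"
  shows "TG g t = t * integral {0..1} (\<lambda>s. (1-s)^2 * g s) / 2
     - (t^2 * integral {0..t} g - 2*t*integral {0..t} (\<lambda>s. s * g s) + integral {0..t} (\<lambda>s. s^2 * g s)) / 2"
proof -
  have gt: "continuous_on {0..t} g" using g t by (auto intro: continuous_on_subset)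
  have i1: "(\<lambda>s. (1-s)^2 * g s) integrable_on {0..1}"
    by (intro integrable_continuous_interval continuous_intros g)
  have i2: "(\<lambda>s. (max (t-s) 0)^2 * g s) integrable_on {0..1}"
    by (intro integrable_continuous_interval continuous_intros g)
  have "TG g t = integral {0..1} (\<lambda>s. t/2 * ((1-s)^2 * g s) - (1/2) * ((max (t-s) 0)^2 * g s))"
    unfolding TG_def G_alt by (simp add: algebra_simps diff_divide_distrib)
  also have "\<dots> = t/2 * integral {0..1} (\<lambda>s. (1-s)^2 * g s) - (1/2) * integral {0..1} (\<lambda>s. (max (t-s) 0)^2 * g s)"
    by (subst integral_diff) (auto intro!: integrable_continuous_interval continuous_intros g)
  also have "integral {0..1} (\<lambda>s. (max (t-s) 0)^2 * g s) =
      integral {0..t} (\<lambda>s. (max (t-s) 0)^2 * g s) + integral {t..1} (\<lambda>s. (max (t-s) 0)^2 * g s)"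
    using Henstock_Kurzweil_Integration.integral_combine[OF _ _ i2, of t] t by simp
  also have "integral {t..1} (\<lambda>s. (max (t-s) 0)^2 * g s) = integral {t..1} (\<lambda>s. 0)"
    by (rule integral_cong) auto
  also have "integral {0..t} (\<lambda>s. (max (t-s) 0)^2 * g s) =
       integral {0..t} (\<lambda>s. t^2 * g s - 2*t*(s * g s) + s^2 * g s)"
    by (rule integral_cong) (auto simp: power2_eq_square algebra_simps)
  also have "\<dots> = t^2 * integral {0..t} g - 2*t*integral {0..t} (\<lambda>s. s * g s) + integral {0..t} (\<lambda>s. s^2 * g s)"
  proof -
    have a: "g integrable_on {0..t}" by (rule integrable_continuous_interval[OF gt])
    have b: "(\<lambda>s. s * g s) integrable_on {0..t}" by (intro integrable_continuous_interval continuous_intros gt)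
    have c: "(\<lambda>s. s^2 * g s) integrable_on {0..t}" by (intro integrable_continuous_interval continuous_intros gt)
    show ?thesis
      apply (subst integral_add)
        apply (intro integrable_continuous_interval continuous_intros gt)
       apply (intro integrable_continuous_interval continuous_intros gt)
      apply (subst integral_diff)
        apply (intro integrable_continuous_interval continuous_intros gt)
       apply (intro integrable_continuous_interval continuous_intros gt)
      using integral_mult[OF a, of "t^2"] integral_mult[OF b, of "2*t"] by (simp add: mult.assoc)
  qed
  finally show ?thesis by (simp add: field_simps)
qed

lemma P_derivs:
  fixes g :: "real \<Rightarrow> real"
  assumes g: "continuous_on {0..1} g" and t: "t \<in> {0..1}"
  defines "A \<equiv> \<lambda>u. integral {0..u} g" and "B1 \<equiv> \<lambda>u. integral {0..u} (\<lambda>s. s * g s)"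
    and "B2 \<equiv> \<lambda>u. integral {0..u} (\<lambda>s. s^2 * g s)" and "K \<equiv> integral {0..1} (\<lambda>s. (1-s)^2 * g s)"
  shows "((\<lambda>t. t * K / 2 - (t^2 * A t - 2*t*B1 t + B2 t) / 2) has_real_derivative (K/2 - t * A t + B1 t)) (at t within {0..1})"
    and "((\<lambda>t. K/2 - t * A t + B1 t) has_real_derivative (- A t)) (at t within {0..1})"
    and "((\<lambda>t. - A t) has_real_derivative (- g t)) (at t within {0..1})"
proof -
  have dA: "(A has_real_derivative g t) (at t within {0..1})"
    unfolding A_def by (rule integral_has_real_derivative[OF g t])
  have dB1: "(B1 has_real_derivative t * g t) (at t within {0..1})"
    unfolding B1_def by (rule integral_has_real_derivative[OF _ t]) (intro continuous_intros g)
  have dB2: "(B2 has_real_derivative t^2 * g t) (at t within {0..1})"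
    unfolding B2_def by (rule integral_has_real_derivative[OF _ t]) (intro continuous_intros g)
  show "((\<lambda>t. t * K / 2 - (t^2 * A t - 2*t*B1 t + B2 t) / 2) has_real_derivative (K/2 - t * A t + B1 t)) (at t within {0..1})"
    by (rule derivative_eq_intros dA dB1 dB2 refl | simp)+ (simp add: field_simps power2_eq_square)
  show "((\<lambda>t. K/2 - t * A t + B1 t) has_real_derivative (- A t)) (at t within {0..1})"
    by (rule derivative_eq_intros dA dB1 dB2 refl | simp)+
  show "((\<lambda>t. - A t) has_real_derivative (- g t)) (at t within {0..1})"
    by (rule derivative_eq_intros dA dB1 dB2 refl | simp)+
qed

lemma comp_cont:
  assumes f_cont: "continuous_on ({0..1} \<times> UNIV) (\<lambda>(t, u). f t u)"
    and x: "continuous_on {0..1} x"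
  shows "continuous_on {0..1} (\<lambda>s. f s (x s))"
proof -
  have "continuous_on {0..1} (\<lambda>s. (\<lambda>(t, u). f t u) (s, x s))"
    by (rule continuous_on_compose2[OF f_cont]) (auto intro!: continuous_intros x)
  thus ?thesis by simp
qed

lemma Top_TG: "Top f x t = TG (\<lambda>s. f s (x s)) t"
  unfolding Top_def TG_def by simp

lemma TG_0: "TG g 0 = 0"
proof -
  have "TG g 0 = integral {0..1} (\<lambda>s::real. 0::real)"
    unfolding TG_def by (intro Henstock_Kurzweil_Integration.integral_cong) (auto simp: G_def)
  thus ?thesis by simp
qed

lemma TG_1: "TG g 1 = 0"
proof -
  have "TG g 1 = integral {0..1} (\<lambda>s::real. 0::real)"
    unfolding TG_def by (intro Henstock_Kurzweil_Integration.integral_cong) (auto simp: G_def)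
  thus ?thesis by simp
qed

lemma fixed_imp_bvp:
  assumes f_cont: "continuous_on ({0..1} \<times> UNIV) (\<lambda>(t, u). f t u)"
    and x: "continuous_on {0..1} x" and fx: "\<forall>t\<in>{0..1}. Top f x t = x t"
  shows "\<exists>y. bvp_solution f y"
proof -
  define g where "g = (\<lambda>s. f s (x s))"
  have g: "continuous_on {0..1} g" unfolding g_def by (rule comp_cont[OF f_cont x])
  define A where "A = (\<lambda>u. integral {0..u} g)"
  define B1 where "B1 = (\<lambda>u. integral {0..u} (\<lambda>s. s * g s))"
  define B2 where "B2 = (\<lambda>u. integral {0..u} (\<lambda>s. s^2 * g s))"
  define K where "K = integral {0..1} (\<lambda>s. (1-s)^2 * g s)"
  define P where "P = (\<lambda>t. t * K / 2 - (t^2 * A t - 2*t*B1 t + B2 t) / 2)"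
  have PT: "P t = TG g t" if "t \<in> {0..1}" for t
    unfolding P_def A_def B1_def B2_def K_def using TG_closed[OF g that] by simp
  have Px: "P t = x t" if "t \<in> {0..1}" for t
    using PT[OF that] fx that unfolding Top_TG g_def by simp
  note D = P_derivs[OF g, folded K_def]
  have D3': "((\<lambda>t. - A t) has_real_derivative (- g t)) (at t)" if "t \<in> {0<..<1}" for t
  proof -
    have "((\<lambda>t. - A t) has_real_derivative (- g t)) (at t within {0<..<1})"
    proof -
      have "t \<in> {0..1}" using that by auto
      moreover have sub: "{0<..<1::real} \<subseteq> {0..1}" by auto
      ultimately show ?thesis using has_field_derivative_subset[OF D(3) sub] by (auto simp: A_def)
    qed
    thus ?thesis using at_within_open[OF that] by simp
  qed
  have c2: "continuous_on {0..1} (\<lambda>t. - A t)"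
    using DERIV_continuous_on[OF D(3)] by (simp add: A_def)
  show ?thesis
    unfolding bvp_solution_def
  proof (intro exI conjI ballI)
    show "(P has_real_derivative (K/2 - t * A t + B1 t)) (at t within {0..1})" if "t \<in> {0..1}" for t
      using D(1)[OF that] by (simp add: P_def A_def B1_def B2_def)
    show "((\<lambda>t. K/2 - t * A t + B1 t) has_real_derivative (- A t)) (at t within {0..1})" if "t \<in> {0..1}" for t
      using D(2)[OF that] by (simp add: A_def B1_def B2_def)
    show "continuous_on {0..1} (\<lambda>t. - A t)" by (rule c2)
    show "((\<lambda>t. - A t) has_real_derivative (- g t)) (at t)" if "t \<in> {0<..<1}" for t
      by (rule D3'[OF that])
    show "- g t + f t (P t) = 0" if "t \<in> {0<..<1}" for t
      using Px[of t] that unfolding g_def by simp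
    show "P 0 = 0" using PT[of 0] TG_0 by simp
    show "P 1 = 0" using PT[of 1] TG_1 by simp
    show "- A 0 = 0" unfolding A_def by simp
  qed
qed

lemma bvp_imp_fixed:
  assumes f_cont: "continuous_on ({0..1} \<times> UNIV) (\<lambda>(t, u). f t u)"
    and sol: "bvp_solution f x"
  shows "continuous_on {0..1} x \<and> (\<forall>t\<in>{0..1}. Top f x t = x t)"
proof -
  obtain x1 x2 x3 where
    d1: "\<forall>t\<in>{0..1}. (x has_real_derivative x1 t) (at t within {0..1})" and
    d2: "\<forall>t\<in>{0..1}. (x1 has_real_derivative x2 t) (at t within {0..1})" and
    c2: "continuous_on {0..1} x2" and
    d3: "\<forall>t\<in>{0<..<1}. (x2 has_real_derivative x3 t) (at t)" and
    eq: "\<forall>t\<in>{0<..<1}. x3 t + f t (x t) = 0" and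
    b0: "x 0 = 0" and b1: "x 1 = 0" and b2: "x2 0 = 0"
    using sol unfolding bvp_solution_def by blast
  have xc: "continuous_on {0..1} x"
    by (rule DERIV_continuous_on) (use d1 in auto)
  define g where "g = (\<lambda>s. f s (x s))"
  have g: "continuous_on {0..1} g" unfolding g_def by (rule comp_cont[OF f_cont xc])
  define A where "A = (\<lambda>u. integral {0..u} g)"
  define B1 where "B1 = (\<lambda>u. integral {0..u} (\<lambda>s. s * g s))"
  define B2 where "B2 = (\<lambda>u. integral {0..u} (\<lambda>s. s^2 * g s))"
  define K where "K = integral {0..1} (\<lambda>s. (1-s)^2 * g s)"
  define P where "P = (\<lambda>t. t * K / 2 - (t^2 * A t - 2*t*B1 t + B2 t) / 2)"
  define P1 where "P1 = (\<lambda>t. K/2 - t * A t + B1 t)"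
  have PT: "P t = TG g t" if "t \<in> {0..1}" for t
    unfolding P_def A_def B1_def B2_def K_def using TG_closed[OF g that] by simp
  note D = P_derivs[OF g, folded K_def]
  have DP: "(P has_real_derivative P1 t) (at t within {0..1})" if "t \<in> {0..1}" for t
    using D(1)[OF that] by (simp add: P_def P1_def A_def B1_def B2_def)
  have DP1: "(P1 has_real_derivative - A t) (at t within {0..1})" if "t \<in> {0..1}" for t
    using D(2)[OF that] by (simp add: P1_def A_def B1_def B2_def)
  have DA: "(A has_real_derivative g t) (at t within {0..1})" if "t \<in> {0..1}" for t
    unfolding A_def by (rule integral_has_real_derivative[OF g that])
  have Acont: "continuous_on {0..1} A"
    by (rule DERIV_continuous_on[OF DA])
  have x2A: "x2 t = - A t" if t: "t \<in> {0..1}" for t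
  proof (cases "t = 0")
    case True thus ?thesis using b2 by (simp add: A_def)
  next
    case False
    hence tpos: "0 < t" using t by auto
    have "(\<lambda>u. x2 u + A u) t = (\<lambda>u. x2 u + A u) 0"
    proof (rule DERIV_isconst_end[OF tpos])
      show "continuous_on {0..t} (\<lambda>u. x2 u + A u)"
        using t by (intro continuous_intros continuous_on_subset[OF c2] continuous_on_subset[OF Acont]) auto
      fix u assume u: "0 < u" "u < t"
      hence u1: "u \<in> {0<..<1}" using t by auto
      have "(A has_real_derivative g u) (at u within {0<..<1})"
        by (rule has_field_derivative_subset[OF DA]) (use u1 in auto)
      hence dAu: "(A has_real_derivative g u) (at u)" using at_within_open[OF u1] by simp
      have "((\<lambda>u. x2 u + A u) has_real_derivative x3 u + g u) (at u)"
        by (intro derivative_intros dAu) (use d3 u1 in auto)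
      moreover have "x3 u + g u = 0" using eq u1 unfolding g_def by auto
      ultimately show "((\<lambda>u. x2 u + A u) has_real_derivative 0) (at u)" by simp
    qed
    thus ?thesis using b2 by (simp add: A_def)
  qed
  have "\<exists>c. \<forall>u\<in>{0..1}. x1 u - P1 u = c"
  proof (rule has_field_derivative_zero_constant)
    show "convex {0..1::real}" by simp
    fix u :: real assume u: "u \<in> {0..1}"
    have "((\<lambda>u. x1 u - P1 u) has_real_derivative x2 u - - A u) (at u within {0..1})"
      by (intro derivative_intros DP1 u) (use d2 u in auto)
    thus "((\<lambda>u. x1 u - P1 u) has_real_derivative 0) (at u within {0..1})"
      using x2A[OF u] by simp
  qed
  then obtain c where c: "\<forall>u\<in>{0..1}. x1 u - P1 u = c" by blast
  have "\<exists>d. \<forall>u\<in>{0..1}. x u - P u - c * u = d"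
  proof (rule has_field_derivative_zero_constant)
    show "convex {0..1::real}" by simp
    fix u :: real assume u: "u \<in> {0..1}"
    have "((\<lambda>u. x u - P u - c * u) has_real_derivative x1 u - P1 u - c * 1) (at u within {0..1})"
      by (intro derivative_intros DP u) (use d1 u in auto)
    thus "((\<lambda>u. x u - P u - c * u) has_real_derivative 0) (at u within {0..1})"
      using c u by simp
  qed
  then obtain d where d: "\<forall>u\<in>{0..1}. x u - P u - c * u = d" by blast
  have P0: "P 0 = 0" using PT[of 0] TG_0 by simp
  have P1': "P 1 = 0" using PT[of 1] TG_1 by simp
  have "d = 0" using d[rule_format, of 0] b0 P0 by simp
  moreover have "c = - d" using d[rule_format, of 1] b1 P1' by simp
  ultimately have xP: "x u = P u" if "u \<in> {0..1}" for u using d that by auto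
  show ?thesis
    using xc xP PT unfolding Top_TG g_def by simp
qed

lemma ftc_real:
  fixes F f :: "real \<Rightarrow> real"
  assumes "a \<le> b" "\<And>x. (F has_real_derivative f x) (at x)"
  shows "integral {a..b} f = F b - F a"
proof (rule integral_unique, rule fundamental_theorem_of_calculus[OF assms(1)])
  fix x assume "x \<in> {a..b}"
  show "(F has_vector_derivative f x) (at x within {a..b})"
    using has_field_derivative_at_within[OF assms(2)[of x]]
    by (simp add: has_real_derivative_iff_has_vector_derivative)
qed

lemma TG_one:
  assumes t: "t \<in> {0..1}"
  shows "TG (\<lambda>s. 1) t = (t - t^3) / 6"
proof -
  have c: "continuous_on {0..1} (\<lambda>s::real. 1::real)" by simp
  have i0: "integral {0..t} (\<lambda>s::real. 1::real) = t"
    using ftc_real[of 0 t "\<lambda>s. s" "\<lambda>s. 1"] t by (auto intro!: derivative_eq_intros)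
  have i1: "integral {0..t} (\<lambda>s::real. s) = t^2/2"
    using ftc_real[of 0 t "\<lambda>s. s^2/2" "\<lambda>s. s"] t by (auto intro!: derivative_eq_intros)
  have i2: "integral {0..t} (\<lambda>s::real. s^2) = t^3/3"
  proof -
    have d: "((\<lambda>s::real. s^3/3) has_real_derivative x^2) (at x)" for x
      by (auto intro!: derivative_eq_intros simp: power2_eq_square)
    show ?thesis using ftc_real[of 0 t "\<lambda>s. s^3/3" "\<lambda>s. s^2", OF _ d] t by simp
  qed
  have i3: "integral {0..1} (\<lambda>s::real. (1-s)^2) = 1/3"
  proof -
    have d: "((\<lambda>s::real. - ((1-s)^3/3)) has_real_derivative (1-x)^2) (at x)" for x
      by (auto intro!: derivative_eq_intros simp: power2_eq_square)
    show ?thesis using ftc_real[of 0 1 "\<lambda>s. - ((1-s)^3/3)" "\<lambda>s. (1-s)^2", OF _ d] by simp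
  qed
  show ?thesis
  proof -
    have "TG (\<lambda>s. 1) t = t * (1/3) / 2 - (t^2 * t - 2*t*(t^2/2) + t^3/3) / 2"
      using TG_closed[OF c t] i0 i1 i2 i3 by simp
    thus ?thesis by (simp add: field_simps power2_eq_square power3_eq_cube)
  qed
qed

lemma G_nonneg: "t \<in> {0..1} \<Longrightarrow> s \<in> {0..1} \<Longrightarrow> 0 \<le> G t s"
  unfolding G_def by (auto intro!: mult_nonneg_nonneg simp: power2_eq_square mult_le_cancel_left1)
    (metis mult_left_le_one_le order_trans)

lemma cube_bound:
  assumes t: "t \<in> {0..1::real}"
  shows "9 * sqrt 3 * ((t - t^3) / 6) \<le> 1"
proof -
  define r where "r = sqrt 3"
  have r2: "r^2 = 3" unfolding r_def by simp
  have rpos: "0 \<le> r" unfolding r_def by simp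
  have "2 - 3*r*t + 3*r*t^3 = (r*t - 1)^2 * (r*t + 2)"
    by (simp add: algebra_simps power2_eq_square power3_eq_cube r2[unfolded power2_eq_square])
  also have "\<dots> \<ge> 0" using t rpos by (intro mult_nonneg_nonneg) auto
  finally have "2 - 3*r*t + 3*r*t^3 \<ge> 0" .
  thus ?thesis unfolding r_def[symmetric] by (simp add: field_simps)
qed

lemma TG_bound:
  assumes g: "continuous_on {0..1} g" and M: "\<forall>s\<in>{0..1}. \<bar>g s\<bar> \<le> M" and t: "t \<in> {0..1}"
  shows "9 * sqrt 3 * \<bar>TG g t\<bar> \<le> M"
proof -
  have M0: "0 \<le> M" using M by force
  have iG: "(\<lambda>s. G t s * g s) integrable_on {0..1}"
    unfolding G_alt by (intro integrable_continuous_interval continuous_intros g) auto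
  have iG1: "(\<lambda>s. G t s * M) integrable_on {0..1}"
    unfolding G_alt by (intro integrable_continuous_interval continuous_intros) auto
  have "integral {0..1} (\<lambda>s. G t s * M) = M * TG (\<lambda>s. 1) t"
    unfolding TG_def using integral_mult[of "\<lambda>s. G t s * 1" "{0..1}" M] iG1
    by (simp add: mult.commute)
  also have "\<dots> = M * ((t - t^3) / 6)" using TG_one[OF t] by simp
  finally have eqM: "integral {0..1} (\<lambda>s. G t s * M) = M * ((t - t^3) / 6)" .
  have le1: "TG g t \<le> integral {0..1} (\<lambda>s. G t s * M)"
    unfolding TG_def
  proof (rule integral_le[OF iG iG1])
    fix s :: real assume s: "s \<in> {0..1}"
    have "\<bar>g s\<bar> \<le> M" using M s by auto
    hence "g s \<le> M" by (simp add: abs_le_iff)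
    thus "G t s * g s \<le> G t s * M"
      using G_nonneg[OF t s] by (intro mult_left_mono) auto
  qed
  have iGm: "(\<lambda>s. - (G t s * M)) integrable_on {0..1}" using iG1 by (rule integrable_neg)
  have le2: "integral {0..1} (\<lambda>s. - (G t s * M)) \<le> TG g t"
    unfolding TG_def
  proof (rule integral_le[OF iGm iG])
    fix s :: real assume s: "s \<in> {0..1}"
    have "\<bar>g s\<bar> \<le> M" using M s by auto
    hence "- M \<le> g s" by (simp add: abs_le_iff)
    hence "G t s * (- M) \<le> G t s * g s"
      using G_nonneg[OF t s] by (intro mult_left_mono) auto
    thus "- (G t s * M) \<le> G t s * g s" by simp
  qed
  have "\<bar>TG g t\<bar> \<le> M * ((t - t^3) / 6)"
  proof -
    have "integral {0..1} (\<lambda>s. - (G t s * M)) = - integral {0..1} (\<lambda>s. G t s * M)"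
      by (rule integral_neg)
    hence "\<bar>TG g t\<bar> \<le> integral {0..1} (\<lambda>s. G t s * M)" using le1 le2 by linarith
    thus ?thesis using eqM by linarith
  qed
  hence "9 * sqrt 3 * \<bar>TG g t\<bar> \<le> 9 * sqrt 3 * (M * ((t - t^3) / 6))"
    by (rule mult_left_mono) simp
  also have "\<dots> = M * (9 * sqrt 3 * ((t - t^3) / 6))" by (simp only: ac_simps)
  also have "\<dots> \<le> M * 1" using cube_bound[OF t] M0 by (intro mult_left_mono) auto
  finally show ?thesis by simp
qed

lemma Top_cont:
  assumes f_cont: "continuous_on ({0..1} \<times> UNIV) (\<lambda>(t, u). f t u)"
    and x: "continuous_on {0..1} x"
  shows "continuous_on {0..1} (Top f x)"
proof -
  define g where "g = (\<lambda>s. f s (x s))"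
  have g: "continuous_on {0..1} g" unfolding g_def by (rule comp_cont[OF f_cont x])
  define K where "K = integral {0..1} (\<lambda>s. (1-s)^2 * g s)"
  define P where "P = (\<lambda>t. t * K / 2 - (t^2 * integral {0..t} g - 2*t*integral {0..t} (\<lambda>s. s * g s) + integral {0..t} (\<lambda>s. s^2 * g s)) / 2)"
  have "continuous_on {0..1} P"
    unfolding P_def K_def by (rule DERIV_continuous_on[OF P_derivs(1)[OF g]])
  moreover have "P t = Top f x t" if "t \<in> {0..1}" for t
    unfolding P_def K_def Top_TG g_def[symmetric] using TG_closed[OF g that] by simp
  ultimately show ?thesis using continuous_on_cong by blast
qed

lemma Top_diff:
  assumes f_cont: "continuous_on ({0..1} \<times> UNIV) (\<lambda>(t, u). f t u)"
    and x: "continuous_on {0..1} x" and y: "continuous_on {0..1} y"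
  shows "Top f x t - Top f y t = TG (\<lambda>s. f s (x s) - f s (y s)) t"
proof -
  have gx: "continuous_on {0..1} (\<lambda>s. f s (x s))" by (rule comp_cont[OF f_cont x])
  have gy: "continuous_on {0..1} (\<lambda>s. f s (y s))" by (rule comp_cont[OF f_cont y])
  have "TG (\<lambda>s. f s (x s) - f s (y s)) t = integral {0..1} (\<lambda>s. G t s * f s (x s) - G t s * f s (y s))"
    unfolding TG_def by (simp add: algebra_simps)
  also have "\<dots> = Top f x t - Top f y t"
    unfolding Top_def
    by (rule integral_diff; unfold G_alt; intro integrable_continuous_interval continuous_intros gx gy; auto)
  finally show ?thesis by simp
qed

lemma phi_props:
  assumes phi: "\<phi> \<in> PhiClass"
  shows "\<And>t. 0 < t \<Longrightarrow> \<phi> t < t" and "\<phi> 0 = 0" and "\<And>t. 0 \<le> t \<Longrightarrow> 0 \<le> \<phi> t"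
    and "\<And>t. 0 \<le> t \<Longrightarrow> \<phi> t \<le> t"
    and "\<And>a b. 0 \<le> a \<Longrightarrow> a \<le> b \<Longrightarrow> \<phi> a \<le> \<phi> b"
    and "\<And>\<epsilon>. 0 < \<epsilon> \<Longrightarrow> \<exists>\<delta>>0. \<forall>t. 0 \<le> t \<and> t < \<epsilon> + \<delta> \<longrightarrow> \<phi> t < \<epsilon>"
proof -
  have nn: "\<forall>t\<ge>0. \<phi> t \<ge> 0" and mo: "mono_on {0..} \<phi>"
    and ph: "\<forall>\<epsilon>>0. \<exists>\<delta>>0. \<forall>t. \<epsilon> \<le> t \<and> t < \<epsilon> + \<delta> \<longrightarrow> \<phi> t < \<epsilon>"
    using phi unfolding PhiClass_def by auto
  show lt: "\<phi> t < t" if "0 < t" for t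
    using ph that by force
  show mono: "\<phi> a \<le> \<phi> b" if "0 \<le> a" "a \<le> b" for a b
    using mono_onD[OF mo, of a b] that by auto
  show z: "\<phi> 0 = 0"
  proof -
    have "\<phi> 0 \<le> t" if "0 < t" for t using mono[of 0 t] lt[OF that] that by linarith
    hence "\<phi> 0 \<le> 0" by (metis dense not_le)
    thus ?thesis using nn by force
  qed
  show "0 \<le> \<phi> t" if "0 \<le> t" for t using nn that by auto
  show "\<phi> t \<le> t" if "0 \<le> t" for t using lt[of t] z that by (cases "t = 0") auto
  show "\<exists>\<delta>>0. \<forall>t. 0 \<le> t \<and> t < \<epsilon> + \<delta> \<longrightarrow> \<phi> t < \<epsilon>" if e: "0 < \<epsilon>" for \<epsilon>
  proof -
    obtain \<delta> where d: "\<delta> > 0" "\<forall>t. \<epsilon> \<le> t \<and> t < \<epsilon> + \<delta> \<longrightarrow> \<phi> t < \<epsilon>" using ph e by blast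
    have "\<phi> t < \<epsilon>" if "0 \<le> t" "t < \<epsilon> + \<delta>" for t
    proof (cases "\<epsilon> \<le> t")
      case True thus ?thesis using d that by auto
    next
      case False
      show ?thesis
      proof (cases "t = 0")
        case True thus ?thesis using z e by simp
      next
        case False thus ?thesis using lt[of t] that \<open>\<not> \<epsilon> \<le> t\<close> by auto
      qed
    qed
    thus ?thesis using d by blast
  qed
qed

lemma phi_iter:
  assumes phi: "\<phi> \<in> PhiClass" and c: "0 \<le> c"
  shows "(\<lambda>n. (\<phi> ^^ n) c) \<longlonglongrightarrow> 0"
proof -
  note P = phi_props[OF phi]
  define X where "X = (\<lambda>n. (\<phi> ^^ n) c)"
  have nn: "0 \<le> X n" for n unfolding X_def by (induction n) (auto simp: c P(3))
  have XS: "X (Suc n) = \<phi> (X n)" for n unfolding X_def by simp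
  have dec: "decseq X" unfolding decseq_Suc_iff using XS nn P(4) by auto
  obtain L where L: "X \<longlonglongrightarrow> L" "\<forall>i. L \<le> X i" using decseq_convergent[OF dec, of 0] nn by blast
  have L0: "0 \<le> L" using LIMSEQ_le_const[OF L(1)] nn by auto
  have "L = 0"
  proof (rule ccontr)
    assume "L \<noteq> 0" hence Lp: "0 < L" using L0 by auto
    obtain \<delta> where d: "\<delta> > 0" "\<forall>t. 0 \<le> t \<and> t < L + \<delta> \<longrightarrow> \<phi> t < L" using P(6)[OF Lp] by blast
    obtain n where "\<forall>m\<ge>n. dist (X m) L < \<delta>" using L(1) d(1) unfolding LIMSEQ_def by blast
    hence "X n < L + \<delta>" by (auto simp: dist_real_def)
    hence "X (Suc n) < L" using d(2) nn XS by auto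
    thus False using L(2) by (metis not_le)
  qed
  thus ?thesis using L X_def by simp
qed

lemma contraction:
  assumes f_cont: "continuous_on ({0..1} \<times> UNIV) (\<lambda>(t, u). f t u)"
    and phi: "\<phi> \<in> PhiClass"
    and J2: "\<forall>a b. \<xi> a b \<ge> 0 \<longrightarrow>
               (\<forall>t\<in>{0..1}. \<bar>f t a - f t b\<bar> \<le> 9 * sqrt 3 * \<phi> \<bar>a - b\<bar>)"
    and x: "continuous_on {0..1} x" and y: "continuous_on {0..1} y"
    and bd: "\<forall>s\<in>{0..1}. \<bar>x s - y s\<bar> \<le> c"
    and xi: "\<forall>s\<in>{0..1}. \<xi> (x s) (y s) \<ge> 0 \<or> \<xi> (y s) (x s) \<ge> 0"
    and t: "t \<in> {0..1}"
  shows "\<bar>Top f x t - Top f y t\<bar> \<le> \<phi> c"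
proof -
  note P = phi_props[OF phi]
  have c0: "0 \<le> c" using bd by force
  have "\<bar>f s (x s) - f s (y s)\<bar> \<le> 9 * sqrt 3 * \<phi> c" if s: "s \<in> {0..1}" for s
  proof -
    have "\<bar>f s (x s) - f s (y s)\<bar> \<le> 9 * sqrt 3 * \<phi> \<bar>x s - y s\<bar>"
    proof -
      from xi s have "\<xi> (x s) (y s) \<ge> 0 \<or> \<xi> (y s) (x s) \<ge> 0" by auto
      thus ?thesis
      proof
        assume "\<xi> (x s) (y s) \<ge> 0" thus ?thesis using J2 s by blast
      next
        assume "\<xi> (y s) (x s) \<ge> 0"
        hence "\<bar>f s (y s) - f s (x s)\<bar> \<le> 9 * sqrt 3 * \<phi> \<bar>y s - x s\<bar>" using J2 s by blast
        thus ?thesis by (simp add: abs_minus_commute)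
      qed
    qed
    also have "\<dots> \<le> 9 * sqrt 3 * \<phi> c"
      using P(5)[of "\<bar>x s - y s\<bar>" c] bd s by (intro mult_left_mono) auto
    finally show ?thesis .
  qed
  hence "9 * sqrt 3 * \<bar>TG (\<lambda>s. f s (x s) - f s (y s)) t\<bar> \<le> 9 * sqrt 3 * \<phi> c"
    by (intro TG_bound[OF _ _ t] continuous_intros comp_cont[OF f_cont x] comp_cont[OF f_cont y]) auto
  hence "\<bar>TG (\<lambda>s. f s (x s) - f s (y s)) t\<bar> \<le> \<phi> c" by simp
  thus ?thesis using Top_diff[OF f_cont x y] by simp
qed

lemma cont_bound:
  assumes "continuous_on {0..1::real} (h :: real \<Rightarrow> real)"
  shows "\<exists>B. \<forall>t\<in>{0..1}. \<bar>h t\<bar> \<le> B"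
proof -
  have "bounded (h ` {0..1})" by (rule compact_imp_bounded[OF compact_continuous_image[OF assms]]) simp
  thus ?thesis unfolding bounded_iff by auto
qed

lemma Top_cong:
  assumes "\<forall>s\<in>{0..1}. x s = y s"
  shows "Top f x t = Top f y t"
  unfolding Top_def by (rule Henstock_Kurzweil_Integration.integral_cong) (use assms in auto)

lemma iter_cont:
  assumes f_cont: "continuous_on ({0..1} \<times> UNIV) (\<lambda>(t, u). f t u)"
    and z: "continuous_on {0..1} z"
  shows "continuous_on {0..1} ((Top f ^^ k) z)"
  by (induction k) (auto intro: Top_cont[OF f_cont] z)

lemma iter_xi:
  assumes f_cont: "continuous_on ({0..1} \<times> UNIV) (\<lambda>(t, u). f t u)"
    and J3: "\<forall>x y. continuous_on {0..1} x \<and> continuous_on {0..1} y \<and>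
               (\<forall>t\<in>{0..1}. \<xi> (x t) (y t) \<ge> 0) \<longrightarrow>
               (\<forall>t\<in>{0..1}. \<xi> (Top f x t) (Top f y t) \<ge> 0)"
    and u: "continuous_on {0..1} u" and v: "continuous_on {0..1} v"
    and xi: "\<forall>t\<in>{0..1}. \<xi> (u t) (v t) \<ge> 0"
  shows "\<forall>t\<in>{0..1}. \<xi> ((Top f ^^ k) u t) ((Top f ^^ k) v t) \<ge> 0"
proof (induction k)
  case 0 thus ?case using xi by simp
next
  case (Suc k)
  thus ?case using J3 iter_cont[OF f_cont u, of k] iter_cont[OF f_cont v, of k] by simp
qed

lemma iter_fixed:
  assumes fx: "\<forall>t\<in>{0..1}. Top f x t = x t"
  shows "\<forall>t\<in>{0..1}. (Top f ^^ k) x t = x t"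
proof (induction k)
  case 0 thus ?case by simp
next
  case (Suc k)
  show ?case
  proof
    fix t :: real assume t: "t \<in> {0..1}"
    have "(Top f ^^ Suc k) x t = Top f ((Top f ^^ k) x) t" by simp
    also have "\<dots> = Top f x t" by (rule Top_cong) (use Suc in auto)
    also have "\<dots> = x t" using fx t by auto
    finally show "(Top f ^^ Suc k) x t = x t" .
  qed
qed

lemma pair_bound:
  assumes f_cont: "continuous_on ({0..1} \<times> UNIV) (\<lambda>(t, u). f t u)"
    and phi: "\<phi> \<in> PhiClass"
    and J2: "\<forall>a b. \<xi> a b \<ge> 0 \<longrightarrow>
               (\<forall>t\<in>{0..1}. \<bar>f t a - f t b\<bar> \<le> 9 * sqrt 3 * \<phi> \<bar>a - b\<bar>)"
    and J3: "\<forall>x y. continuous_on {0..1} x \<and> continuous_on {0..1} y \<and>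
               (\<forall>t\<in>{0..1}. \<xi> (x t) (y t) \<ge> 0) \<longrightarrow>
               (\<forall>t\<in>{0..1}. \<xi> (Top f x t) (Top f y t) \<ge> 0)"
    and u: "continuous_on {0..1} u" and v: "continuous_on {0..1} v"
    and xi: "(\<forall>t\<in>{0..1}. \<xi> (u t) (v t) \<ge> 0) \<or> (\<forall>t\<in>{0..1}. \<xi> (v t) (u t) \<ge> 0)"
  shows "\<exists>c\<ge>0. \<forall>k. \<forall>t\<in>{0..1}. \<bar>(Top f ^^ k) u t - (Top f ^^ k) v t\<bar> \<le> (\<phi> ^^ k) c"
proof -
  obtain B where B: "\<forall>t\<in>{0..1}. \<bar>u t - v t\<bar> \<le> B"
    using cont_bound[of "\<lambda>t. u t - v t"] u v by (auto intro: continuous_intros)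
  have B0: "0 \<le> B" using B by force
  have xik: "\<forall>t\<in>{0..1}. \<xi> ((Top f ^^ k) u t) ((Top f ^^ k) v t) \<ge> 0 \<or> \<xi> ((Top f ^^ k) v t) ((Top f ^^ k) u t) \<ge> 0" for k
    using xi iter_xi[OF f_cont J3 u v, of k] iter_xi[OF f_cont J3 v u, of k] by blast
  have "\<forall>t\<in>{0..1}. \<bar>(Top f ^^ k) u t - (Top f ^^ k) v t\<bar> \<le> (\<phi> ^^ k) B" for k
  proof (induction k)
    case 0 thus ?case using B by simp
  next
    case (Suc k)
    show ?case
      using contraction[OF f_cont phi J2 iter_cont[OF f_cont u, of k] iter_cont[OF f_cont v, of k] Suc xik[of k]]
      by simp
  qed
  thus ?thesis using B0 by blast
qed

lemma uniqueness:
  fixes z :: "nat \<Rightarrow> real \<Rightarrow> real" and n :: nat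
  assumes f_cont: "continuous_on ({0..1} \<times> UNIV) (\<lambda>(t, u). f t u)"
    and phi: "\<phi> \<in> PhiClass"
    and J2: "\<forall>a b. \<xi> a b \<ge> 0 \<longrightarrow>
               (\<forall>t\<in>{0..1}. \<bar>f t a - f t b\<bar> \<le> 9 * sqrt 3 * \<phi> \<bar>a - b\<bar>)"
    and J3: "\<forall>x y. continuous_on {0..1} x \<and> continuous_on {0..1} y \<and>
               (\<forall>t\<in>{0..1}. \<xi> (x t) (y t) \<ge> 0) \<longrightarrow>
               (\<forall>t\<in>{0..1}. \<xi> (Top f x t) (Top f y t) \<ge> 0)"
    and z0: "z 0 = x" and zn: "z n = y" and zc: "\<forall>i\<le>n. continuous_on {0..1} (z i)"
    and zxi: "\<forall>i\<in>{1..n}. (\<forall>t\<in>{0..1}. \<xi> (z (i - 1) t) (z i t) \<ge> 0) \<or>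
                         (\<forall>t\<in>{0..1}. \<xi> (z i t) (z (i - 1) t) \<ge> 0)"
    and fx: "\<forall>t\<in>{0..1}. Top f x t = x t" and fy: "\<forall>t\<in>{0..1}. Top f y t = y t"
    and t: "t \<in> {0..1}"
  shows "x t = y t"
proof -
  have "\<forall>i\<in>{1..n}. \<exists>c\<ge>0. \<forall>k. \<forall>t\<in>{0..1}. \<bar>(Top f ^^ k) (z (i-1)) t - (Top f ^^ k) (z i) t\<bar> \<le> (\<phi> ^^ k) c"
  proof
    fix i assume i: "i \<in> {1..n}"
    show "\<exists>c\<ge>0. \<forall>k. \<forall>t\<in>{0..1}. \<bar>(Top f ^^ k) (z (i-1)) t - (Top f ^^ k) (z i) t\<bar> \<le> (\<phi> ^^ k) c"
    proof (rule pair_bound[OF f_cont phi J2 J3])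
      have "i - 1 \<le> n" using i by auto
      thus "continuous_on {0..1} (z (i - 1))" using zc by blast
      show "continuous_on {0..1} (z i)" using zc i by simp
    qed (use zxi i in auto)
  qed
  then obtain c where c: "\<forall>i\<in>{1..n}. c i \<ge> 0 \<and> (\<forall>k. \<forall>t\<in>{0..1}. \<bar>(Top f ^^ k) (z (i-1)) t - (Top f ^^ k) (z i) t\<bar> \<le> (\<phi> ^^ k) (c i))"
    by metis
  have chain: "m \<le> n \<Longrightarrow> \<bar>(Top f ^^ k) (z 0) t - (Top f ^^ k) (z m) t\<bar> \<le> (\<Sum>i\<in>{1..m}. (\<phi> ^^ k) (c i))" for m k
  proof (induction m)
    case 0 thus ?case by simp
  next
    case (Suc m)
    have "\<bar>(Top f ^^ k) (z m) t - (Top f ^^ k) (z (Suc m)) t\<bar> \<le> (\<phi> ^^ k) (c (Suc m))"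
    proof -
      have "Suc m \<in> {1..n}" using Suc.prems by auto
      from c[rule_format, OF this] t show ?thesis by simp
    qed
    moreover have "(\<Sum>i\<in>{1..Suc m}. (\<phi> ^^ k) (c i)) = (\<Sum>i\<in>{1..m}. (\<phi> ^^ k) (c i)) + (\<phi> ^^ k) (c (Suc m))"
      by (simp add: sum.cl_ivl_Suc)
    moreover have "\<bar>(Top f ^^ k) (z 0) t - (Top f ^^ k) (z m) t\<bar> \<le> (\<Sum>i\<in>{1..m}. (\<phi> ^^ k) (c i))"
      using Suc by simp
    ultimately show ?case by linarith
  qed
  have lim: "(\<lambda>k. \<Sum>i\<in>{1..n}. (\<phi> ^^ k) (c i)) \<longlonglongrightarrow> (\<Sum>i\<in>{1..n}. 0)"
    by (intro tendsto_sum phi_iter[OF phi]) (use c in auto)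
  have bnd: "\<bar>x t - y t\<bar> \<le> (\<Sum>i\<in>{1..n}. (\<phi> ^^ k) (c i))" for k
  proof -
    have "(Top f ^^ k) x t = x t" "(Top f ^^ k) y t = y t"
      using iter_fixed[OF fx, of k] iter_fixed[OF fy, of k] t by auto
    thus ?thesis using chain[of n k] z0 zn by simp
  qed
  have "\<bar>x t - y t\<bar> \<le> (\<Sum>i\<in>{1..n}. (0::real))"
    by (rule LIMSEQ_le_const[OF lim]) (use bnd in blast)
  thus ?thesis by simp
qed



lemma cauchy_core:
  fixes X :: "nat \<Rightarrow> real \<Rightarrow> real" and N :: nat and e :: "nat \<Rightarrow> real"
  assumes N: "N \<ge> 1" and phi: "\<phi> \<in> PhiClass" and e: "e \<longlonglongrightarrow> 0"
    and d1: "\<forall>n. \<forall>t\<in>{0..1}. \<bar>X n t - X (Suc n) t\<bar> \<le> e n"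
    and contrN: "\<forall>k a c. (\<forall>s\<in>{0..1}. \<bar>X a s - X (a+1+k*N) s\<bar> \<le> c) \<longrightarrow>
          (\<forall>t\<in>{0..1}. \<bar>X (Suc a) t - X (Suc (a+1+k*N)) t\<bar> \<le> \<phi> c)"
    and eps: "\<epsilon> > 0"
  shows "\<exists>n0. \<forall>n\<ge>n0. \<forall>m\<ge>n. \<forall>t\<in>{0..1}. \<bar>X n t - X m t\<bar> \<le> 2 * \<epsilon>"
proof -
  note P = phi_props[OF phi]
  obtain \<delta>0 where d0: "\<delta>0 > 0" "\<forall>t. 0 \<le> t \<and> t < \<epsilon> + \<delta>0 \<longrightarrow> \<phi> t < \<epsilon>"
    using P(6)[OF eps] by blast
  define \<delta> where "\<delta> = min \<delta>0 \<epsilon>"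
  have dpos: "\<delta> > 0" and dle: "\<delta> \<le> \<delta>0" "\<delta> \<le> \<epsilon>" using d0 eps unfolding \<delta>_def by auto
  define \<eta> where "\<eta> = \<delta> / (2 * N)"
  have Npos: "real N \<ge> 1" using N by simp
  have epos: "\<eta> > 0" unfolding \<eta>_def using dpos Npos by simp
  have Neta: "real N * \<eta> = \<delta> / 2" unfolding \<eta>_def using Npos by (simp add: field_simps)
  obtain n0 where n0: "\<forall>m\<ge>n0. e m < \<eta>"
  proof -
    obtain n0 where "\<forall>m\<ge>n0. dist (e m) 0 < \<eta>" using e epos unfolding LIMSEQ_def by blast
    hence "\<forall>m\<ge>n0. e m < \<eta>" by (auto simp: dist_real_def)
    thus ?thesis using that by blast
  qed
  have S: "\<forall>t\<in>{0..1}. \<bar>X a t - X (a+r) t\<bar> \<le> real r * \<eta>" if a: "a \<ge> n0" for a r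
  proof (induction r)
    case 0 thus ?case by simp
  next
    case (Suc r)
    show ?case
    proof
      fix t :: real assume t: "t \<in> {0..1}"
      have "\<bar>X (a+r) t - X (Suc (a+r)) t\<bar> \<le> e (a+r)" using d1 t by blast
      also have "\<dots> < \<eta>" using n0 a by auto
      finally have "\<bar>X (a+r) t - X (a + Suc r) t\<bar> \<le> \<eta>" by simp
      moreover have "\<bar>X a t - X (a+r) t\<bar> \<le> real r * \<eta>" using Suc t by blast
      ultimately show "\<bar>X a t - X (a + Suc r) t\<bar> \<le> real (Suc r) * \<eta>"
        by (simp add: algebra_simps)
    qed
  qed
  have Q: "\<forall>a\<ge>n0. \<forall>t\<in>{0..1}. \<bar>X a t - X (a+1+k*N) t\<bar> \<le> \<epsilon> + \<delta>/2" for k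
  proof (induction k)
    case 0
    show ?case
    proof (intro allI impI ballI)
      fix a t assume a: "a \<ge> n0" and t: "(t::real) \<in> {0..1}"
      have "\<bar>X a t - X (Suc a) t\<bar> \<le> e a" using d1 t by blast
      also have "\<dots> < \<eta>" using n0 a by auto
      also have "\<eta> \<le> real N * \<eta>" using Npos epos by simp
      finally show "\<bar>X a t - X (a+1+0*N) t\<bar> \<le> \<epsilon> + \<delta>/2" using Neta eps by simp
    qed
  next
    case (Suc k)
    show ?case
    proof (intro allI impI ballI)
      fix a t assume a: "a \<ge> n0" and t: "(t::real) \<in> {0..1}"
      define b where "b = a + N - 1"
      have b: "b \<ge> n0" unfolding b_def using a N by simp
      have "\<forall>s\<in>{0..1}. \<bar>X b s - X (b+1+k*N) s\<bar> \<le> \<epsilon> + \<delta>/2" using Suc b by blast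
      hence "\<bar>X (Suc b) t - X (Suc (b+1+k*N)) t\<bar> \<le> \<phi> (\<epsilon> + \<delta>/2)" using contrN t by blast
      also have "\<phi> (\<epsilon> + \<delta>/2) < \<epsilon>" using d0(2) dpos dle eps by auto
      finally have 1: "\<bar>X (a + N) t - X (a+1+Suc k*N) t\<bar> < \<epsilon>"
        unfolding b_def using N by (simp add: algebra_simps)
      have "\<bar>X a t - X (a+N) t\<bar> \<le> real N * \<eta>" using S[OF a, of N] t by blast
      thus "\<bar>X a t - X (a+1+Suc k*N) t\<bar> \<le> \<epsilon> + \<delta>/2" using 1 Neta by linarith
    qed
  qed
  show ?thesis
  proof (intro exI allI impI ballI)
    fix n m t assume n: "n0 \<le> n" and m: "n \<le> m" and t: "(t::real) \<in> {0..1}"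
    show "\<bar>X n t - X m t\<bar> \<le> 2 * \<epsilon>"
    proof (cases "m = n")
      case True thus ?thesis using eps by simp
    next
      case False
      define k where "k = (m - n - 1) div N"
      define r where "r = (m - n - 1) mod N"
      have rN: "r < N" unfolding r_def using N by simp
      have kr: "k*N + r = m - n - 1" unfolding k_def r_def by (rule div_mult_mod_eq)
      have meq: "m = (n+1+k*N) + r" using kr False m by linarith
      have 1: "\<bar>X n t - X (n+1+k*N) t\<bar> \<le> \<epsilon> + \<delta>/2" using Q n t by blast
      have "\<bar>X (n+1+k*N) t - X ((n+1+k*N) + r) t\<bar> \<le> real r * \<eta>" using S[of "n+1+k*N" r] n t by auto
      also have "\<dots> \<le> real N * \<eta>" using rN epos by (intro mult_right_mono) auto
      finally have 2: "\<bar>X (n+1+k*N) t - X m t\<bar> \<le> \<delta>/2" using meq Neta by simp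
      show ?thesis using 1 2 dle by linarith
    qed
  qed
qed

lemma Top_limit:
  assumes f_cont: "continuous_on ({0..1} \<times> UNIV) (\<lambda>(t, u). f t u)"
    and Xc: "\<And>n. continuous_on {0..1} (X n)" and lc: "continuous_on {0..1} l"
    and ul: "uniform_limit {0..1} X l sequentially"
    and t: "t \<in> {0..1}"
  shows "(\<lambda>n. Top f (X n) t) \<longlonglongrightarrow> Top f l t"
proof -
  obtain B where B: "\<forall>s\<in>{0..1}. \<bar>l s\<bar> \<le> B" using cont_bound[OF lc] by blast
  define K where "K = {0..1::real} \<times> {-B-1..B+1}"
  have cK: "compact K" unfolding K_def by (intro compact_Times compact_Icc)
  have uc: "uniformly_continuous_on K (\<lambda>(t, u). f t u)"
    by (rule compact_uniformly_continuous[OF continuous_on_subset[OF f_cont] cK]) (auto simp: K_def)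
  show ?thesis
    unfolding tendsto_iff
  proof (intro allI impI)
    fix \<epsilon> :: real assume e: "\<epsilon> > 0"
    obtain d where d: "d > 0" "\<forall>p\<in>K. \<forall>q\<in>K. dist q p < d \<longrightarrow> dist ((\<lambda>(t, u). f t u) q) ((\<lambda>(t, u). f t u) p) < \<epsilon>/2"
      using uc e unfolding uniformly_continuous_on_def by (metis half_gt_zero)
    have ev: "\<forall>\<^sub>F n in sequentially. \<forall>s\<in>{0..1}. dist (X n s) (l s) < min d 1"
    proof -
      have "min d 1 > 0" using d(1) by simp
      from ul[unfolded uniform_limit_iff, rule_format, OF this] show ?thesis .
    qed
    show "\<forall>\<^sub>F n in sequentially. dist (Top f (X n) t) (Top f l t) < \<epsilon>"
    proof (rule eventually_mono[OF ev])
      fix n assume H: "\<forall>s\<in>{0..1}. dist (X n s) (l s) < min d 1"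
      have fb: "\<bar>f s (X n s) - f s (l s)\<bar> \<le> \<epsilon>/2" if s: "s \<in> {0..1}" for s
      proof -
        have h: "\<bar>X n s - l s\<bar> < d" "\<bar>X n s - l s\<bar> < 1" using H s by (auto simp: dist_real_def)
        have Bs: "\<bar>l s\<bar> \<le> B" using B s by auto
        have p: "(s, l s) \<in> K" using Bs s unfolding K_def by (auto simp: abs_le_iff)
        have q: "(s, X n s) \<in> K" using Bs s h(2) unfolding K_def by (auto simp: abs_le_iff abs_less_iff)
        have "dist (s, X n s) (s, l s) = \<bar>X n s - l s\<bar>" by (simp add: dist_Pair_Pair dist_real_def)
        hence "dist (f s (X n s)) (f s (l s)) < \<epsilon>/2" using d(2) p q h(1) by fastforce
        thus ?thesis by (simp add: dist_real_def)
      qed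
      have "9 * sqrt 3 * \<bar>TG (\<lambda>s. f s (X n s) - f s (l s)) t\<bar> \<le> \<epsilon>/2"
        by (rule TG_bound[OF _ _ t]) (use fb in \<open>auto intro!: continuous_intros comp_cont[OF f_cont Xc] comp_cont[OF f_cont lc]\<close>)
      moreover have "1 \<le> 9 * sqrt (3::real)"
      proof -
        have "1 \<le> sqrt (3::real)" by simp
        thus ?thesis by linarith
      qed
      ultimately have "\<bar>TG (\<lambda>s. f s (X n s) - f s (l s)) t\<bar> \<le> \<epsilon>/2"
        using mult_right_mono[of 1 "9 * sqrt 3" "\<bar>TG (\<lambda>s. f s (X n s) - f s (l s)) t\<bar>"] by simp
      thus "dist (Top f (X n) t) (Top f l t) < \<epsilon>"
        using Top_diff[OF f_cont Xc lc] e by (simp add: dist_real_def)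
    qed
  qed
qed

lemma existence_fp:
  assumes f_cont: "continuous_on ({0..1} \<times> UNIV) (\<lambda>(t, u). f t u)"
    and phi: "\<phi> \<in> PhiClass"
    and J1: "\<exists>N::nat. N \<ge> 1 \<and> (\<forall>a :: nat \<Rightarrow> real.
               (\<forall>i\<le>N. \<xi> (a i) (a (Suc i)) \<ge> 0) \<longrightarrow> \<xi> (a 0) (a (N + 1)) \<ge> 0)"
    and J2: "\<forall>a b. \<xi> a b \<ge> 0 \<longrightarrow>
               (\<forall>t\<in>{0..1}. \<bar>f t a - f t b\<bar> \<le> 9 * sqrt 3 * \<phi> \<bar>a - b\<bar>)"
    and J3: "\<forall>x y. continuous_on {0..1} x \<and> continuous_on {0..1} y \<and>
               (\<forall>t\<in>{0..1}. \<xi> (x t) (y t) \<ge> 0) \<longrightarrow>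
               (\<forall>t\<in>{0..1}. \<xi> (Top f x t) (Top f y t) \<ge> 0)"
    and J4: "\<exists>x0. continuous_on {0..1} x0 \<and> (\<forall>t\<in>{0..1}. \<xi> (x0 t) (Top f x0 t) \<ge> 0)"
  shows "\<exists>x. continuous_on {0..1} x \<and> (\<forall>t\<in>{0..1}. Top f x t = x t)"
proof -
  obtain N :: nat where N: "N \<ge> 1" and J1N: "\<forall>a :: nat \<Rightarrow> real.
               (\<forall>i\<le>N. \<xi> (a i) (a (Suc i)) \<ge> 0) \<longrightarrow> \<xi> (a 0) (a (N + 1)) \<ge> 0"
    using J1 by blast
  obtain x0 where x0: "continuous_on {0..1} x0" and x0xi: "\<forall>t\<in>{0..1}. \<xi> (x0 t) (Top f x0 t) \<ge> 0"
    using J4 by blast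
  define X where "X n = (Top f ^^ n) x0" for n
  have XS: "X (Suc n) = Top f (X n)" for n unfolding X_def by simp
  have Xc: "continuous_on {0..1} (X n)" for n unfolding X_def by (rule iter_cont[OF f_cont x0])
  have xi1: "\<forall>t\<in>{0..1}. \<xi> (X n t) (X (Suc n) t) \<ge> 0" for n
    using iter_xi[OF f_cont J3 x0 Top_cont[OF f_cont x0] x0xi, of n]
    unfolding X_def by (simp add: funpow_swap1)
  have xiN: "\<forall>n. \<forall>t\<in>{0..1}. \<xi> (X n t) (X (n + 1 + k*N) t) \<ge> 0" for k
  proof (induction k)
    case 0 thus ?case using xi1 by simp
  next
    case (Suc k)
    show ?case
    proof (intro allI ballI)
      fix n and t :: real assume t: "t \<in> {0..1}"
      define a where "a i = (if i = 0 then X n t else X (n + k*N + i) t)" for i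
      have "\<forall>i\<le>N. \<xi> (a i) (a (Suc i)) \<ge> 0"
      proof (intro allI impI)
        fix i :: nat assume "i \<le> N"
        show "\<xi> (a i) (a (Suc i)) \<ge> 0"
        proof (cases "i = 0")
          case True thus ?thesis using Suc t unfolding a_def by (simp add: algebra_simps)
        next
          case False thus ?thesis using xi1[of "n + k*N + i"] t unfolding a_def by simp
        qed
      qed
      hence "\<xi> (a 0) (a (N + 1)) \<ge> 0" using J1N by blast
      thus "\<xi> (X n t) (X (n + 1 + Suc k * N) t) \<ge> 0" unfolding a_def by (simp add: algebra_simps)
    qed
  qed
  have contrXi: "\<forall>t\<in>{0..1}. \<bar>X (Suc a) t - X (Suc b) t\<bar> \<le> \<phi> c"
    if "\<forall>s\<in>{0..1}. \<bar>X a s - X b s\<bar> \<le> c" "\<forall>s\<in>{0..1}. \<xi> (X a s) (X b s) \<ge> 0" for a b c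
    using contraction[OF f_cont phi J2 Xc Xc that(1)] that(2) unfolding XS by blast
  obtain c0 where c0: "\<forall>t\<in>{0..1}. \<bar>X 0 t - X 1 t\<bar> \<le> c0"
    using cont_bound[of "\<lambda>t. X 0 t - X 1 t"] Xc by (auto intro!: continuous_intros)
  have c00: "0 \<le> c0" using c0 by force
  define e where "e n = (\<phi> ^^ n) c0" for n
  have e: "e \<longlonglongrightarrow> 0" unfolding e_def by (rule phi_iter[OF phi c00])
  have d1: "\<forall>t\<in>{0..1}. \<bar>X n t - X (Suc n) t\<bar> \<le> e n" for n
  proof (induction n)
    case 0 thus ?case using c0 unfolding e_def by simp
  next
    case (Suc n)
    thus ?case using contrXi[OF Suc xi1[of n]] unfolding e_def by simp
  qed
  have contrN: "\<forall>k a c. (\<forall>s\<in>{0..1}. \<bar>X a s - X (a+1+k*N) s\<bar> \<le> c) \<longrightarrow>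
          (\<forall>t\<in>{0..1}. \<bar>X (Suc a) t - X (Suc (a+1+k*N)) t\<bar> \<le> \<phi> c)"
    using contrXi xiN by blast
  have UC: "uniformly_Cauchy_on {0..1} X"
    unfolding uniformly_Cauchy_on_def
  proof (intro allI impI)
    fix \<epsilon> :: real assume eps: "\<epsilon> > 0"
    obtain n0 where n0: "\<forall>n\<ge>n0. \<forall>m\<ge>n. \<forall>t\<in>{0..1}. \<bar>X n t - X m t\<bar> \<le> 2 * (\<epsilon>/3)"
      using cauchy_core[OF N phi e allI[OF d1] contrN, of "\<epsilon>/3"] eps by auto
    have "dist (X m t) (X n t) < \<epsilon>" if "t \<in> {0..1}" "m \<ge> n0" "n \<ge> n0" for t m n
    proof (cases "m \<le> n")
      case True
      hence "\<bar>X m t - X n t\<bar> \<le> 2 * (\<epsilon>/3)" using n0 that by blast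
      thus ?thesis using eps by (simp add: dist_real_def)
    next
      case False
      hence "\<bar>X n t - X m t\<bar> \<le> 2 * (\<epsilon>/3)" using n0 that by auto
      thus ?thesis using eps by (simp add: dist_real_def abs_minus_commute)
    qed
    thus "\<exists>M. \<forall>x\<in>{0..1}. \<forall>m\<ge>M. \<forall>n\<ge>M. dist (X m x) (X n x) < \<epsilon>" by blast
  qed
  obtain l where ul: "uniform_limit {0..1} X l sequentially"
    using Cauchy_uniformly_convergent[OF UC] unfolding uniformly_convergent_on_def by blast
  have lc: "continuous_on {0..1} l"
    by (rule uniform_limit_theorem[OF _ ul]) (auto simp: Xc)
  have "Top f l t = l t" if t: "t \<in> {0..1}" for t
  proof -
    have 1: "(\<lambda>n. X (Suc n) t) \<longlonglongrightarrow> Top f l t"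
      unfolding XS by (rule Top_limit[OF f_cont Xc lc ul t])
    have "(\<lambda>n. X n t) \<longlonglongrightarrow> l t" by (rule tendsto_uniform_limitI[OF ul t])
    hence 2: "(\<lambda>n. X (Suc n) t) \<longlonglongrightarrow> l t" by (rule LIMSEQ_Suc)
    show ?thesis using LIMSEQ_unique[OF 1 2] .
  qed
  thus ?thesis using lc by blast
qed

theorem theorem8:
  fixes f :: "real \<Rightarrow> real \<Rightarrow> real" and \<xi> :: "real \<Rightarrow> real \<Rightarrow> real" and \<phi> :: "real \<Rightarrow> real"
  assumes f_cont: "continuous_on ({0..1} \<times> UNIV) (\<lambda>(t, u). f t u)"
    and phi: "\<phi> \<in> PhiClass"
    and J1: "\<exists>N::nat. N \<ge> 1 \<and> (\<forall>a :: nat \<Rightarrow> real.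
               (\<forall>i\<le>N. \<xi> (a i) (a (Suc i)) \<ge> 0) \<longrightarrow> \<xi> (a 0) (a (N + 1)) \<ge> 0)"
    and J2: "\<forall>a b. \<xi> a b \<ge> 0 \<longrightarrow>
               (\<forall>t\<in>{0..1}. \<bar>f t a - f t b\<bar> \<le> 9 * sqrt 3 * \<phi> \<bar>a - b\<bar>)"
    and J3: "\<forall>x y. continuous_on {0..1} x \<and> continuous_on {0..1} y \<and>
               (\<forall>t\<in>{0..1}. \<xi> (x t) (y t) \<ge> 0) \<longrightarrow>
               (\<forall>t\<in>{0..1}. \<xi> (Top f x t) (Top f y t) \<ge> 0)"
    and J4: "\<exists>x0. continuous_on {0..1} x0 \<and> (\<forall>t\<in>{0..1}. \<xi> (x0 t) (Top f x0 t) \<ge> 0)"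
  shows "(\<exists>x. bvp_solution f x) \<and>
    ((\<forall>x y. continuous_on {0..1} x \<and> continuous_on {0..1} y \<longrightarrow>
        (\<exists>(n::nat) (z :: nat \<Rightarrow> real \<Rightarrow> real). z 0 = x \<and> z n = y \<and>
            (\<forall>i\<le>n. continuous_on {0..1} (z i)) \<and>
            (\<forall>i\<in>{1..n}. (\<forall>t\<in>{0..1}. \<xi> (z (i - 1) t) (z i t) \<ge> 0) \<or>
                         (\<forall>t\<in>{0..1}. \<xi> (z i t) (z (i - 1) t) \<ge> 0))))
     \<longrightarrow> (\<forall>x y. bvp_solution f x \<and> bvp_solution f y \<longrightarrow> (\<forall>t\<in>{0..1}. x t = y t)))"
proof -
  obtain x where x: "continuous_on {0..1} x" "\<forall>t\<in>{0..1}. Top f x t = x t"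
    using existence_fp[OF f_cont phi J1 J2 J3 J4] by blast
  have ex: "\<exists>x. bvp_solution f x" by (rule fixed_imp_bvp[OF f_cont x])
  show ?thesis
  proof (intro conjI impI allI, rule ex)
    fix x y assume H: "\<forall>x y. continuous_on {0..1} x \<and> continuous_on {0..1} y \<longrightarrow>
        (\<exists>(n::nat) (z :: nat \<Rightarrow> real \<Rightarrow> real). z 0 = x \<and> z n = y \<and>
            (\<forall>i\<le>n. continuous_on {0..1} (z i)) \<and>
            (\<forall>i\<in>{1..n}. (\<forall>t\<in>{0..1}. \<xi> (z (i - 1) t) (z i t) \<ge> 0) \<or>
                         (\<forall>t\<in>{0..1}. \<xi> (z i t) (z (i - 1) t) \<ge> 0)))"
      and S: "bvp_solution f x \<and> bvp_solution f y"
    have fx: "continuous_on {0..1} x \<and> (\<forall>t\<in>{0..1}. Top f x t = x t)"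
      using bvp_imp_fixed[OF f_cont] S by blast
    have fy: "continuous_on {0..1} y \<and> (\<forall>t\<in>{0..1}. Top f y t = y t)"
      using bvp_imp_fixed[OF f_cont] S by blast
    obtain n and z :: "nat \<Rightarrow> real \<Rightarrow> real" where z: "z 0 = x" "z n = y"
      "\<forall>i\<le>n. continuous_on {0..1} (z i)"
      "\<forall>i\<in>{1..n}. (\<forall>t\<in>{0..1}. \<xi> (z (i - 1) t) (z i t) \<ge> 0) \<or>
                         (\<forall>t\<in>{0..1}. \<xi> (z i t) (z (i - 1) t) \<ge> 0)"
      using H fx fy by blast
    show "\<forall>t\<in>{0..1}. x t = y t"
      using uniqueness[OF f_cont phi J2 J3 z] fx fy by blast
  qed
qed

end
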